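(* For all integers $n\geq0$, \[ \sum_{j=0}^n\binom{2j}{j}4^{n-j}O_jH_{n-j}=2^{2n-1}(n+1)\Bigl((1-H_{n+1})^2+1-H_{n+1}^{(2)}\Bigr)-\sum_{j=1}^nC_{n-j}4^{j-1}j\Bigl((1-H_j)^2+1-H_j^{(2)}\Bigr). \]
   Context: $H_n=\sum_{k=1}^n\frac1k$ ($H_0=0$), $H_n^{(2)}=\sum_{k=1}^n\frac1{k^2}$ ($H_0^{(2)}=0$), $O_n=\sum_{k=1}^n\frac1{2k-1}$ ($O_0=0$), and $C_n=\frac1{n+1}\binom{2n}{n}$ is the $n$th Catalan number. An empty sum is $0$. *)

theory Defs
  imports Complex_Main
begin

definition H :: "nat \<Rightarrow> real" where
  "H n = (\<Sum>k=1..n. 1 / real k)"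

definition H2 :: "nat \<Rightarrow> real" where
  "H2 n = (\<Sum>k=1..n. 1 / (real k)^2)"

definition oddH :: "nat \<Rightarrow> real" where
  "oddH n = (\<Sum>k=1..n. 1 / (2 * real k - 1))"

definition catalan :: "nat \<Rightarrow> real" where
  "catalan n = real ((2*n) choose n) / real (n + 1)"

end

theory Submission imports Defs "HOL-Computational_Algebra.Formal_Power_Series" begin

unbundle fps_syntax

definition P :: "real \<Rightarrow> nat \<Rightarrow> real" where "P a k = pochhammer a k / fact k"
definition R :: "real \<Rightarrow> nat \<Rightarrow> real" where "R b m = (\<Sum>i<m. 1 / (b + real i))"

lemma P_gchoose: "P a k = (-1)^k * ((-a) gchoose k)"
  by (simp add: P_def gbinomial_pochhammer)

lemma vander: "(\<Sum>k=0..n. P a k * P b (n-k)) = P (a+b) n"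
proof -
  have "(\<Sum>k=0..n. P a k * P b (n-k)) = (\<Sum>k=0..n. (-1)^n * (((-a) gchoose k) * ((-b) gchoose (n-k))))"
    by (rule sum.cong) (auto simp: P_gchoose power_add[symmetric])
  also have "\<dots> = (-1)^n * ((-a) + (-b) gchoose n)"
    by (simp add: sum_distrib_left[symmetric] gbinomial_Vandermonde)
  finally show ?thesis by (simp add: P_gchoose)
qed

lemma deriv_poch:
  assumes "b > 0"
  shows "((\<lambda>x. pochhammer x m) has_real_derivative (pochhammer b m * R b m)) (at b)"
proof (induction m)
  case 0
  then show ?case by (simp add: R_def)
next
  case (Suc m)
  have "((\<lambda>x. (x + real m) * pochhammer x m) has_real_derivative
     (1 * pochhammer b m + (pochhammer b m * R b m) * (b + real m))) (at b)"
    by (rule DERIV_mult[OF _ Suc.IH]) (auto intro!: derivative_eq_intros)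
  moreover have "1 * pochhammer b m + (pochhammer b m * R b m) * (b + real m)
     = pochhammer b (Suc m) * R b (Suc m)"
    using assms by (simp add: R_def pochhammer_rec' field_simps)
  moreover have "(\<lambda>x. pochhammer x (Suc m)) = (\<lambda>x. (x + real m) * pochhammer x m)"
    by (simp add: pochhammer_rec')
  ultimately show ?case by simp
qed

lemma deriv_P:
  assumes "b > 0"
  shows "((\<lambda>x. P x m) has_real_derivative (P b m * R b m)) (at b)"
  unfolding P_def using deriv_poch[OF assms, of m]
  by (auto intro!: derivative_eq_intros)

lemma vander_deriv:
  assumes "a > 0" "b > 0"
  shows "(\<Sum>k=0..n. P a k * (P b (n-k) * R b (n-k))) = P (a+b) n * R (a+b) n"
proof -
  have d1: "((\<lambda>x. \<Sum>k=0..n. P a k * P x (n-k)) has_real_derivative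
      (\<Sum>k=0..n. P a k * (P b (n-k) * R b (n-k)))) (at b)"
    by (intro DERIV_sum DERIV_cmult deriv_P assms)
  have d2: "((\<lambda>x. P (a+x) n) has_real_derivative (P (a+b) n * R (a+b) n)) (at b)"
  proof -
    have e: "((\<lambda>x. P x n) has_real_derivative (P (a+b) n * R (a+b) n)) (at (a+b))"
      using deriv_P[of "a+b" n] assms by simp
    have f: "((\<lambda>x. a + x) has_real_derivative 1) (at b)"
      by (auto intro!: derivative_eq_intros)
    show ?thesis using DERIV_chain2[where f="\<lambda>x. P x n" and g="\<lambda>x. a+x", OF e f] f by simp
  qed
  have "(\<lambda>x. \<Sum>k=0..n. P a k * P x (n-k)) = (\<lambda>x. P (a+x) n)"
    by (simp add: vander)
  with d1 d2 show ?thesis using DERIV_unique by metis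
qed

abbreviation c :: "nat \<Rightarrow> real" where "c k \<equiv> real ((2*k) choose k)"

lemma c_P: "c k = 4^k * P (1/2) k"
proof -
  have "c k = fact (2*k) / (fact k * fact k)"
    by (simp add: binomial_fact mult_2)
  also have "\<dots> = 2^(2*k) * pochhammer (1/2) k * fact k / (fact k * fact k)"
    by (simp add: fact_double)
  also have "\<dots> = 4^k * P (1/2) k"
    by (simp add: P_def power_mult)
  finally show ?thesis .
qed

lemma P_one: "P 1 n = 1"
  by (simp add: P_def pochhammer_fact[symmetric])

lemma P_half: "P (1/2) k = c k / 4^k"
  by (simp add: c_P)

lemma H_Suc: "H (Suc n) = H n + 1 / real (Suc n)"
  by (simp add: H_def)

lemma H2_Suc: "H2 (Suc n) = H2 n + 1 / (real (Suc n))^2"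
  by (simp add: H2_def)

lemma oddH_Suc: "oddH (Suc n) = oddH n + 1 / (2 * real (Suc n) - 1)"
  by (simp add: oddH_def)

lemma R_one: "R 1 n = H n"
  by (induction n) (auto simp: R_def H_def add.commute)

lemma R_half: "R (1/2) n = 2 * oddH n"
proof (induction n)
  case 0 then show ?case by (simp add: R_def oddH_def)
next
  case (Suc n)
  have "R (1/2) (Suc n) = R (1/2) n + 1 / (1/2 + real n)" by (simp add: R_def)
  also have "1 / (1/2 + real n) = 2 * (1 / (2 * real (Suc n) - 1))"
    by (simp add: field_simps)
  finally show ?case using Suc by (simp add: oddH_Suc algebra_simps)
qed

lemma P_mhalf_Suc: "P (-(1/2)) (Suc i) = - (1/2) * P (1/2) i / real (Suc i)"
  by (simp add: P_def pochhammer_rec field_simps)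

lemma P_zero: "n > 0 \<Longrightarrow> P 0 n = 0"
  by (cases n) (auto simp: P_def pochhammer_rec)

lemma lemA: "(\<Sum>k=0..n. c k * (c (n-k) * oddH (n-k))) = 4^n * H n / 2"
proof -
  have "(\<Sum>k=0..n. c k * (c (n-k) * oddH (n-k)))
     = (\<Sum>k=0..n. (4^n / 2) * (P (1/2) k * (P (1/2) (n-k) * R (1/2) (n-k))))"
    by (rule sum.cong) (auto simp: c_P R_half power_add[symmetric])
  also have "\<dots> = (4^n/2) * (\<Sum>k=0..n. P (1/2) k * (P (1/2) (n-k) * R (1/2) (n-k)))"
    by (rule sum_distrib_left[symmetric])
  also have "\<dots> = (4^n/2) * (P 1 n * R 1 n)"
    using vander_deriv[of "1/2" "1/2" n] by simp
  finally show ?thesis by (simp add: P_one R_one)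
qed

definition K :: "nat \<Rightarrow> real" where
  "K j = (if j = 0 then 1 else -2 * catalan (j-1))"

lemma K_P: "K j = 4^j * P (-(1/2)) j"
proof (cases j)
  case 0 then show ?thesis by (simp add: K_def P_def)
next
  case (Suc i)
  have "4^j * P (-(1/2)) j = 4 * (4^i / 4^i) * (- (1/2) * c i / real (Suc i))"
    using Suc by (simp add: P_mhalf_Suc P_half)
  also have "\<dots> = -2 * (c i / real (Suc i))" by (simp add: field_simps)
  finally show ?thesis using Suc by (simp add: K_def catalan_def)
qed

lemma lemC: "(\<Sum>k=0..n. c k * K (n-k)) = (if n = 0 then 1 else 0)"
proof -
  have "(\<Sum>k=0..n. c k * K (n-k)) = (\<Sum>k=0..n. 4^n * (P (1/2) k * P (-(1/2)) (n-k)))"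
    by (rule sum.cong) (auto simp: c_P K_P power_add[symmetric])
  also have "\<dots> = 4^n * P 0 n"
    using vander[of "1/2" "-(1/2)" n] by (simp add: sum_distrib_left[symmetric])
  finally show ?thesis by (cases "n = 0") (simp add: P_def, simp add: P_zero)
qed

lemma H_0 [simp]: "H 0 = 0" by (simp add: H_def)
lemma H2_0 [simp]: "H2 0 = 0" by (simp add: H2_def)

lemma HSd: "m \<le> n \<Longrightarrow> H (Suc n - m) = H (n-m) + 1 / real (n+1-m)"
  by (simp add: Suc_diff_le H_Suc)

lemma alg_pf: "(a::real) > 0 \<Longrightarrow> b > 0 \<Longrightarrow> 1 / (a * b) = (1/a + 1/b) / (a + b)"
proof -
  assume "a > 0" "b > 0"
  then have "a + b \<noteq> 0" "a \<noteq> 0" "b \<noteq> 0" by auto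
  then have "1/a + 1/b = (a+b)/(a*b)" by (simp add: field_simps)
  then show ?thesis using \<open>a + b \<noteq> 0\<close> by simp
qed

lemma alg_E: "(d::real) \<noteq> 0 \<Longrightarrow> h^2 - q + 2*h/d = (h + 1/d)^2 - (q + 1/d^2)"
  by (simp add: field_simps power2_eq_square)

lemma alg_B: "(d::real) \<noteq> 0 \<Longrightarrow> (d-1) * ((1-h)^2 + 1 - q) + (h^2 - q) = d * ((1 - (h + 1/d))^2 + 1 - (q + 1/d^2))"
  by (simp add: field_simps power2_eq_square)

lemma H_sum: "H (Suc n) = (\<Sum>m=0..n. 1 / real (m+1))"
  by (induction n) (simp_all add: H_Suc)

lemma conv1: "(\<Sum>m=0..n. 1 / (real (m+1) * real (n+1-m))) = 2 * H (Suc n) / real (Suc (Suc n))"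
proof -
  have "(\<Sum>m=0..n. 1 / (real (m+1) * real (n+1-m)))
     = (\<Sum>m=0..n. (1 / real (m+1) + 1 / real (n+1-m)) / real (n+2))"
  proof (rule sum.cong)
    fix m assume "m \<in> {0..n}"
    then have e: "real (n+2) = real (m+1) + real (n+1-m)" by auto
    show "1 / (real (m+1) * real (n+1-m)) = (1 / real (m+1) + 1 / real (n+1-m)) / real (n+2)"
      unfolding e by (rule alg_pf) (use \<open>m \<in> {0..n}\<close> in auto)
  qed simp
  also have "\<dots> = ((\<Sum>m=0..n. 1 / real (m+1)) + (\<Sum>m=0..n. 1 / real (n+1-m))) / real (n+2)"
    by (simp only: sum.distrib[symmetric] sum_divide_distrib)
  also have "(\<Sum>m=0..n. 1 / real (n+1-m)) = (\<Sum>m=0..n. 1 / real (m+1))"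
    using sum.atLeastAtMost_rev[of "\<lambda>m. 1 / real (m+1)" 0 n]
    by (simp add: Suc_diff_le)
  finally show ?thesis by (simp add: H_sum)
qed

lemma lemE: "(\<Sum>m=0..n. H (n-m) / real (m+1)) = H (Suc n)^2 - H2 (Suc n)"
proof (induction n)
  case 0 then show ?case by (simp add: H_def H2_def)
next
  case (Suc n)
  have "(\<Sum>m=0..Suc n. H (Suc n - m) / real (m+1)) = (\<Sum>m=0..n. H (Suc n - m) / real (m+1))"
    by (simp add: H_def)
  also have "\<dots> = (\<Sum>m=0..n. H (n - m) / real (m+1) + 1 / (real (m+1) * real (n+1-m)))"
    by (rule sum.cong) (auto simp: HSd add_divide_distrib)
  also have "\<dots> = (\<Sum>m=0..n. H (n - m) / real (m+1)) + (\<Sum>m=0..n. 1 / (real (m+1) * real (n+1-m)))"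
    by (rule sum.distrib)
  also have "\<dots> = H (Suc n)^2 - H2 (Suc n) + 2 * H (Suc n) / real (Suc (Suc n))"
    by (simp only: Suc.IH conv1)
  also have "\<dots> = H (Suc (Suc n))^2 - H2 (Suc (Suc n))"
    unfolding H_Suc[of "Suc n"] H2_Suc[of "Suc n"]
    unfolding H_Suc[of "Suc n"] H2_Suc[of "Suc n"] by (rule alg_E) simp
  finally show ?case .
qed

lemma lemB: "(\<Sum>m=0..n. H m * H (n-m)) = real (Suc n) * ((1 - H (Suc n))^2 + 1 - H2 (Suc n))"
proof (induction n)
  case 0 then show ?case by (simp add: H_def H2_def)
next
  case (Suc n)
  have "(\<Sum>m=0..Suc n. H m * H (Suc n - m)) = (\<Sum>m=0..n. H m * H (Suc n - m))"
    by (simp add: H_def)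
  also have "\<dots> = (\<Sum>m=0..n. H m * H (n - m) + H m / real (n+1-m))"
    by (rule sum.cong) (auto simp: HSd distrib_left)
  also have "(\<Sum>m=0..n. H m / real (n+1-m)) = (\<Sum>m=0..n. H (n-m) / real (m+1))"
    using sum.atLeastAtMost_rev[of "\<lambda>m. H m / real (n+1-m)" 0 n]
    by (simp add: Suc_diff_le)
  then have "(\<Sum>m=0..n. H m * H (n - m) + H m / real (n+1-m))
      = real (Suc n) * ((1 - H (Suc n))^2 + 1 - H2 (Suc n)) + (H (Suc n)^2 - H2 (Suc n))"
    by (simp only: sum.distrib Suc.IH lemE)
  also have "\<dots> = real (Suc (Suc n)) * ((1 - H (Suc (Suc n)))^2 + 1 - H2 (Suc (Suc n)))"
  proof -
    have e: "real (Suc n) = real (Suc (Suc n)) - 1" by simp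
    show ?thesis unfolding H_Suc[of "Suc n"] H2_Suc[of "Suc n"] e by (rule alg_B) simp
  qed
  finally show ?case .
qed

definition L :: "nat \<Rightarrow> real" where
  "L n = (\<Sum>j=0..n. c j * 4^(n-j) * oddH j * H (n-j))"
definition T :: "nat \<Rightarrow> real" where
  "T n = 4^n / 2 * (\<Sum>m=0..n. H m * H (n-m))"

lemma conv_main: "(\<Sum>i=0..n. T i * K (n-i)) = L n"
proof -
  define Of where "Of = Abs_fps (\<lambda>j. c j * oddH j)"
  define Hf where "Hf = Abs_fps (\<lambda>m. 4^m * H m)"
  define Bf where "Bf = Abs_fps c"
  define Kf where "Kf = Abs_fps K"
  have 1: "Abs_fps L = Of * Hf"
  proof (rule fps_ext)
    fix n show "Abs_fps L $ n = (Of * Hf) $ n"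
      unfolding fps_mult_nth Of_def Hf_def L_def fps_nth_Abs_fps
      by (rule sum.cong) auto
  qed
  have 2: "Bf * Of = fps_const (1/2) * Hf"
  proof (rule fps_ext)
    fix n show "(Bf * Of) $ n = (fps_const (1/2) * Hf) $ n"
    proof -
      have "(fps_const (1/2) * Hf) $ n = 1/2 * (4^n * H n)" by (simp add: Hf_def)
      moreover have "(Bf * Of) $ n = (\<Sum>k=0..n. c k * (c (n-k) * oddH (n-k)))"
        unfolding fps_mult_nth Of_def Bf_def by simp
      ultimately show ?thesis using lemA[of n] by simp
    qed
  qed
  have 3: "Abs_fps T = fps_const (1/2) * (Hf * Hf)"
  proof (rule fps_ext)
    fix n
    have "(Hf * Hf) $ n = (\<Sum>i=0..n. 4^n * (H i * H (n-i)))"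
      unfolding fps_mult_nth Hf_def fps_nth_Abs_fps
      by (rule sum.cong) (auto simp: power_add[symmetric])
    then show "Abs_fps T $ n = (fps_const (1/2) * (Hf * Hf)) $ n"
      by (simp add: T_def sum_distrib_left[symmetric])
  qed
  have 4: "Bf * Kf = 1"
  proof (rule fps_ext)
    fix n show "(Bf * Kf) $ n = (1::real fps) $ n"
      unfolding fps_mult_nth Kf_def Bf_def fps_nth_Abs_fps
      using lemC[of n] by simp
  qed
  have "Abs_fps T * Kf = Abs_fps L"
  proof -
    have "Abs_fps T * Kf = ((fps_const (1/2) * Hf) * Hf) * Kf"
      unfolding 3 by (simp add: mult.assoc)
    also have "\<dots> = ((Bf * Of) * Hf) * Kf" by (simp only: 2)
    also have "\<dots> = (Bf * Kf) * (Of * Hf)" by (simp add: mult_ac)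
    finally have "Abs_fps T * Kf = (Bf * Kf) * (Of * Hf)" .
    then show ?thesis using 1 4 by simp
  qed
  then have "(Abs_fps T * Kf) $ n = L n" by simp
  then show ?thesis unfolding fps_mult_nth Kf_def by simp
qed

lemma T_eq: "T n = 4^n / 2 * (real (Suc n) * ((1 - H (Suc n))^2 + 1 - H2 (Suc n)))"
  by (simp add: T_def lemB)

theorem corollary10:
  fixes n :: nat
  shows "(\<Sum>j=0..n. real ((2*j) choose j) * 4^(n-j) * oddH j * H (n-j))
    = 2 powr (2 * real n - 1) * real (n+1) * ((1 - H (n+1))^2 + 1 - H2 (n+1))
      - (\<Sum>j=1..n. catalan (n-j) * 4^(j-1) * real j * ((1 - H j)^2 + 1 - H2 j))"
proof -
  have p: "2 powr (2 * real n - 1) = 4^n / 2"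
    proof -
    have "2 powr (2 * real n) = (2 powr 2) powr real n" by (simp only: powr_powr)
    also have "(2::real) powr 2 = 4" by simp
    also have "(4::real) powr real n = 4 ^ n" by (simp add: powr_realpow)
    finally show ?thesis by (simp add: powr_diff)
  qed
  have Tn: "2 powr (2 * real n - 1) * real (n+1) * ((1 - H (n+1))^2 + 1 - H2 (n+1)) = T n"
    unfolding p T_eq by simp
  have sj: "(\<Sum>j=1..n. catalan (n-j) * 4^(j-1) * real j * ((1 - H j)^2 + 1 - H2 j))
      = (\<Sum>j=1..n. 2 * T (j-1) * catalan (n-j))"
  proof (rule sum.cong)
    fix j assume "j \<in> {1..n}"
    then have "Suc (j-1) = j" by auto
    then show "catalan (n-j) * 4^(j-1) * real j * ((1 - H j)^2 + 1 - H2 j) = 2 * T (j-1) * catalan (n-j)"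
      unfolding T_eq by simp
  qed simp
  have main: "L n = T n - (\<Sum>j=1..n. 2 * T (j-1) * catalan (n-j))"
  proof (cases n)
    case 0 then show ?thesis using conv_main[of 0] by (simp add: K_def)
  next
    case (Suc m)
    have "L n = (\<Sum>i=0..m. T i * K (Suc m - i)) + T (Suc m) * K 0"
      using conv_main[of n] Suc by simp
    also have "(\<Sum>i=0..m. T i * K (Suc m - i)) = - (\<Sum>i=0..m. 2 * T i * catalan (m - i))"
      by (simp add: sum_negf[symmetric], rule sum.cong) (auto simp: K_def Suc_diff_le)
    also have "(\<Sum>i=0..m. 2 * T i * catalan (m - i)) = (\<Sum>j=1..n. 2 * T (j-1) * catalan (n-j))"
      using sum.shift_bounds_cl_Suc_ivl[of "\<lambda>j. 2 * T (j-1) * catalan (n-j)" 0 m] Suc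
      by (simp del: sum.cl_ivl_Suc)
    finally show ?thesis using Suc by (simp add: K_def)
  qed
  show ?thesis unfolding Tn sj main[symmetric] L_def by simp
qed

end
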